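(* Let $R$ be a ringed tree with at least $\ell+1$ levels, where $\ell\ge 2$, and let $u_1,u_2,\dots,u_{2^\ell}$ be the vertices of level $\ell$ in their cyclic order along the level-$\ell$ cycle. Then for every tree decomposition $(T,\phi)$ of $R$ there exist a node $w\in V(T)$ and indices $i<j$ with $u_i,u_j\in\phi^{-1}(w)$ and $\min\{j-i,\ 2^\ell+i-j\}\ge 2^{\ell-2}$.
   Context: A ringed tree with levels $0,1,\dots,L$ has vertices $v_{k,j}$ for $0\le k\le L$, $1\le j\le 2^k$; its edges are the edges of the complete binary tree ($v_{k,j}$ adjacent to $v_{k+1,2j-1}$ and $v_{k+1,2j}$) together with, for each level $k$, the cycle $v_{k,1}v_{k,2}\cdots v_{k,2^k}v_{k,1}$ joining consecutive vertices of that level. A tree decomposition of a graph $H$ is a pair $(T,\phi)$ where $T$ is a tree and $\phi$ assigns to each vertex $x$ of $H$ a (nonempty) subtree $\phi(x)$ of $T$ such that $\phi(x)\cap\phi(y)\ne\emptyset$ whenever $xy\in E(H)$; for a node $t$ of $T$, $\phi^{-1}(t)=\{x\in V(H): t\in\phi(x)\}$. *)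

theory Defs
  imports Main
begin

definition is_path :: "('b \<Rightarrow> 'b \<Rightarrow> bool) \<Rightarrow> 'b set \<Rightarrow> 'b list \<Rightarrow> bool" where
  "is_path E S p \<longleftrightarrow> p \<noteq> [] \<and> set p \<subseteq> S \<and> (\<forall>i. Suc i < length p \<longrightarrow> E (p ! i) (p ! Suc i))"

definition connected_on :: "('b \<Rightarrow> 'b \<Rightarrow> bool) \<Rightarrow> 'b set \<Rightarrow> bool" where
  "connected_on E S \<longleftrightarrow> (\<forall>x\<in>S. \<forall>y\<in>S. \<exists>p. is_path E S p \<and> hd p = x \<and> last p = y)"

definition has_cycle :: "'b set \<Rightarrow> ('b \<Rightarrow> 'b \<Rightarrow> bool) \<Rightarrow> bool" where
  "has_cycle V E \<longleftrightarrow> (\<exists>p. is_path E V p \<and> distinct p \<and> length p \<ge> 3 \<and> E (last p) (hd p))"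

definition is_tree :: "'b set \<Rightarrow> ('b \<Rightarrow> 'b \<Rightarrow> bool) \<Rightarrow> bool" where
  "is_tree V E \<longleftrightarrow> finite V \<and> V \<noteq> {}
     \<and> (\<forall>x y. E x y \<longrightarrow> x \<in> V \<and> y \<in> V \<and> E y x \<and> x \<noteq> y)
     \<and> connected_on E V \<and> \<not> has_cycle V E"

definition is_subtree :: "'b set \<Rightarrow> ('b \<Rightarrow> 'b \<Rightarrow> bool) \<Rightarrow> 'b set \<Rightarrow> bool" where
  "is_subtree V E S \<longleftrightarrow> S \<noteq> {} \<and> S \<subseteq> V \<and> connected_on E S"

definition tree_decomposition ::
  "'a set \<Rightarrow> ('a \<Rightarrow> 'a \<Rightarrow> bool) \<Rightarrow> 'b set \<Rightarrow> ('b \<Rightarrow> 'b \<Rightarrow> bool) \<Rightarrow> ('a \<Rightarrow> 'b set) \<Rightarrow> bool" where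
  "tree_decomposition VH EH VT ET phi \<longleftrightarrow> is_tree VT ET
     \<and> (\<forall>x\<in>VH. is_subtree VT ET (phi x))
     \<and> (\<forall>x\<in>VH. \<forall>y\<in>VH. EH x y \<longrightarrow> phi x \<inter> phi y \<noteq> {})"

text \<open>Vertex v_{k,j} is represented by the pair (k,j).\<close>
definition ringed_verts :: "nat \<Rightarrow> (nat \<times> nat) set" where
  "ringed_verts L = {(k, j). k \<le> L \<and> 1 \<le> j \<and> j \<le> 2 ^ k}"

text \<open>Directed version of the edges: tree edges and level-cycle edges.\<close>
definition ringed_arc :: "nat \<Rightarrow> nat \<times> nat \<Rightarrow> nat \<times> nat \<Rightarrow> bool" where
  "ringed_arc L x y \<longleftrightarrow> x \<in> ringed_verts L \<and> y \<in> ringed_verts L \<and>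
     ((fst y = Suc (fst x) \<and> (snd y = 2 * snd x - 1 \<or> snd y = 2 * snd x))
      \<or> (fst y = fst x \<and> (snd y = Suc (snd x) \<or> (snd x = 2 ^ fst x \<and> snd y = 1))))"

definition ringed_edge :: "nat \<Rightarrow> nat \<times> nat \<Rightarrow> nat \<times> nat \<Rightarrow> bool" where
  "ringed_edge L x y \<longleftrightarrow> ringed_arc L x y \<or> ringed_arc L y x"

end

theory Submission
  imports Defs
begin


fun wk :: "('b \<Rightarrow> 'b \<Rightarrow> bool) \<Rightarrow> 'b set \<Rightarrow> 'b list \<Rightarrow> bool" where
  "wk E S [] = False"
| "wk E S [x] = (x \<in> S)"
| "wk E S (x # y # xs) = (x \<in> S \<and> E x y \<and> wk E S (y # xs))"

lemma is_path_wk: "is_path E S p \<longleftrightarrow> wk E S p"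
proof (induction E S p rule: wk.induct)
  case (1 E S) then show ?case by (simp add: is_path_def)
next
  case (2 E S x) then show ?case by (simp add: is_path_def)
next
  case (3 E S x y xs)
  have "is_path E S (x # y # xs) \<longleftrightarrow> x \<in> S \<and> E x y \<and> is_path E S (y # xs)"
  proof
    assume h: "is_path E S (x # y # xs)"
    have "\<forall>i. Suc i < length (y # xs) \<longrightarrow> E ((y#xs) ! i) ((y#xs) ! Suc i)"
    proof (intro allI impI)
      fix i assume "Suc i < length (y # xs)"
      then have "Suc (Suc i) < length (x # y # xs)" by simp
      then show "E ((y#xs) ! i) ((y#xs) ! Suc i)" using h unfolding is_path_def by fastforce
    qed
    then show "x \<in> S \<and> E x y \<and> is_path E S (y # xs)" using h unfolding is_path_def by force
  next
    assume h: "x \<in> S \<and> E x y \<and> is_path E S (y # xs)"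
    show "is_path E S (x # y # xs)" unfolding is_path_def
    proof (intro conjI allI impI)
      fix i assume "Suc i < length (x # y # xs)"
      then show "E ((x # y # xs) ! i) ((x # y # xs) ! Suc i)"
        using h unfolding is_path_def by (cases i) auto
    qed (use h in \<open>auto simp: is_path_def\<close>)
  qed
  then show ?case using 3 by simp
qed

lemma wk_ne: "wk E S p \<Longrightarrow> p \<noteq> []" by (cases p) auto

lemma wk_hd: "wk E S (x # xs) \<Longrightarrow> x \<in> S" by (cases xs) auto

lemma wk_set: "wk E S p \<Longrightarrow> set p \<subseteq> S"
  by (induction E S p rule: wk.induct) auto

lemma wk_mono: "wk E S p \<Longrightarrow> S \<subseteq> S' \<Longrightarrow> wk E S' p"
  by (induction E S p rule: wk.induct) auto

lemma wk_restrict: "wk E S p \<Longrightarrow> v \<notin> S \<Longrightarrow> wk (\<lambda>x y. E x y \<and> x \<noteq> v \<and> y \<noteq> v) S p"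
  by (induction E S p rule: wk.induct) (auto dest: wk_hd)

lemma wk_restrict_rev: "wk (\<lambda>x y. E x y \<and> x \<noteq> v \<and> y \<noteq> v) S p \<Longrightarrow> wk E S p"
  by (induction "(\<lambda>x y. E x y \<and> x \<noteq> v \<and> y \<noteq> v)" S p rule: wk.induct) auto

lemma wk_append: "wk E S xs \<Longrightarrow> wk E S ys \<Longrightarrow> last xs = hd ys \<Longrightarrow>
   wk E S (xs @ tl ys) \<and> hd (xs @ tl ys) = hd xs \<and> last (xs @ tl ys) = last ys"
proof (induction E S xs rule: wk.induct)
  case (2 E S x)
  then show ?case by (cases ys) (auto simp: wk_ne)
next
  case (3 E S x y xs)
  then show ?case by auto
qed auto

lemma wk_prefix: "wk E S (xs @ ys) \<Longrightarrow> xs \<noteq> [] \<Longrightarrow> wk E S xs"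
proof (induction xs)
  case (Cons a xs) then show ?case by (cases xs) (auto dest: wk_hd)
qed auto

lemma connected_wk: "connected_on E S \<longleftrightarrow> (\<forall>x\<in>S. \<forall>y\<in>S. \<exists>p. wk E S p \<and> hd p = x \<and> last p = y)"
  unfolding connected_on_def is_path_wk ..

lemma connected_union:
  assumes "connected_on E A" "connected_on E B" "A \<inter> B \<noteq> {}"
  shows "connected_on E (A \<union> B)"
proof -
  obtain z where z: "z \<in> A" "z \<in> B" using assms(3) by auto
  have cA: "\<exists>p. wk E (A\<union>B) p \<and> hd p = x \<and> last p = y" if "x \<in> A" "y \<in> A" for x y
    using assms(1) that unfolding connected_wk by (meson Un_upper1 wk_mono)
  have cB: "\<exists>p. wk E (A\<union>B) p \<and> hd p = x \<and> last p = y" if "x \<in> B" "y \<in> B" for x y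
    using assms(2) that unfolding connected_wk by (meson Un_upper2 wk_mono)
  have tr: "\<exists>p. wk E (A\<union>B) p \<and> hd p = x \<and> last p = y"
    if "\<exists>p. wk E (A\<union>B) p \<and> hd p = x \<and> last p = z" "\<exists>p. wk E (A\<union>B) p \<and> hd p = z \<and> last p = y" for x y
    using that wk_append by metis
  show ?thesis unfolding connected_wk
    using cA cB tr z by (metis Un_iff)
qed



lemma leaf_walk:
  assumes sym: "\<And>x y. E x y \<Longrightarrow> E y x" and leaf: "\<And>q. E v q \<Longrightarrow> q = p"
  shows "wk E S q \<Longrightarrow> hd q \<noteq> v \<Longrightarrow> last q \<noteq> v \<Longrightarrow>
    \<exists>q'. wk E (S - {v}) q' \<and> hd q' = hd q \<and> last q' = last q"
proof (induction "length q" arbitrary: q rule: less_induct)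
  case less
  show ?case
  proof (cases q)
    case Nil then show ?thesis using less by simp
  next
    case (Cons x rest)
    show ?thesis
    proof (cases rest)
      case Nil then show ?thesis using less Cons by (intro exI[of _ q]) auto
    next
      case (Cons y rest')
      note q = \<open>q = x # rest\<close> Cons
      show ?thesis
      proof (cases "y = v")
        case False
        have "wk E S rest" using less q by simp
        moreover have "last rest \<noteq> v" using less q by simp
        ultimately obtain q'' where q'': "wk E (S - {v}) q''" "hd q'' = y" "last q'' = last rest"
          using less(1)[of rest] q False by auto
        have "x \<in> S - {v}" "E x y" using less q by auto
        then have "wk E (S - {v}) (x # q'')" using q'' by (cases q'') auto
        then show ?thesis using q q'' wk_ne[OF q''(1)] by (intro exI[of _ "x # q''"]) auto
      next
        case True
        have "E x v" using less(2) q True by simp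
        then have xp: "x = p" using sym leaf by blast
        obtain z rest'' where r': "rest' = z # rest''" using less q True by (cases rest') auto
        have "E v z" using less(2) q True r' by simp
        then have zp: "z = p" by (rule leaf)
        have w: "wk E S (z # rest'')" using less q r' by simp
        have "last (z # rest'') \<noteq> v" using less q r' by simp
        moreover have "hd (z # rest'') \<noteq> v" using less(3) q xp zp by simp
        ultimately obtain q'' where q'': "wk E (S - {v}) q''" "hd q'' = z" "last q'' = last (z # rest'')"
          using less(1)[of "z # rest''"] q r' w by auto
        then show ?thesis using q r' xp zp by (intro exI[of _ q'']) auto
      qed
    qed
  qed
qed

lemma leaf_connected:
  assumes sym: "\<And>x y. E x y \<Longrightarrow> E y x" and leaf: "\<And>q. E v q \<Longrightarrow> q = p"
    and c: "connected_on E S"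
  shows "connected_on (\<lambda>x y. E x y \<and> x \<noteq> v \<and> y \<noteq> v) (S - {v})"
  unfolding connected_wk
proof (intro ballI)
  fix x y assume xy: "x \<in> S - {v}" "y \<in> S - {v}"
  then obtain q where "wk E S q" "hd q = x" "last q = y" using c unfolding connected_wk by blast
  moreover have "hd q \<noteq> v" "last q \<noteq> v" using xy \<open>hd q = x\<close> \<open>last q = y\<close> by auto
  ultimately obtain q' where "wk E (S - {v}) q'" "hd q' = x" "last q' = y"
    using leaf_walk[where E=E and v=v and p=p and S=S and q=q, OF sym leaf] by blast
  then show "\<exists>p. wk (\<lambda>x y. E x y \<and> x \<noteq> v \<and> y \<noteq> v) (S - {v}) p \<and> hd p = x \<and> last p = y"
  proof (intro exI conjI)
    show "wk (\<lambda>x y. E x y \<and> x \<noteq> v \<and> y \<noteq> v) (S - {v}) q'"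
      by (rule wk_restrict) (use \<open>wk E (S - {v}) q'\<close> in auto)
  qed (use \<open>hd q' = x\<close> \<open>last q' = y\<close> in auto)
qed

lemma leaf_in:
  assumes leaf: "\<And>q. E v q \<Longrightarrow> q = p"
    and c: "connected_on E S" and "v \<in> S" "w \<in> S" "w \<noteq> v"
  shows "p \<in> S"
proof -
  obtain q where q: "wk E S q" "hd q = v" "last q = w" using c assms unfolding connected_wk by blast
  obtain y r where qq: "q = v # y # r"
  proof (cases q)
    case Nil then show ?thesis using q by simp
  next
    case (Cons a t)
    then show ?thesis using q assms that by (cases t) auto
  qed
  then have "E v y" "wk E S (y # r)" using q by auto
  then show ?thesis using leaf wk_hd by metis
qed

lemma leaf_exists:
  assumes t: "is_tree V E" and xy: "x \<in> V" "y \<in> V" "x \<noteq> y"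
  shows "\<exists>v\<in>V. \<exists>p. E v p \<and> (\<forall>q. E v q \<longrightarrow> q = p)"
proof -
  have fin: "finite V" and ed: "\<And>a b. E a b \<Longrightarrow> a \<in> V \<and> b \<in> V \<and> E b a \<and> a \<noteq> b"
    and con: "connected_on E V" and nc: "\<not> has_cycle V E" using t unfolding is_tree_def by (blast, blast, blast, blast)
  obtain q where q: "wk E V q" "hd q = x" "last q = y" using con xy unfolding connected_wk by blast
  obtain z r where qz: "q = x # z # r"
  proof (cases q)
    case Nil then show ?thesis using q by simp
  next
    case (Cons a t)
    then show ?thesis using q xy that by (cases t) auto
  qed
  then have "E x z" using q by simp
  then have P0: "wk E V [z, x] \<and> distinct [z, x]" using ed[OF \<open>E x z\<close>] by (simp add: eq_commute)
  define P where "P = (\<lambda>p. wk E V p \<and> distinct p)"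
  have bnd: "\<forall>p. P p \<longrightarrow> length p < Suc (card V)"
  proof (intro allI impI)
    fix p assume "P p"
    then have w: "wk E V p" and d: "distinct p" by (simp_all add: P_def)
    have "set p \<subseteq> V" by (rule wk_set[OF w])
    then have "card (set p) \<le> card V" by (rule card_mono[OF fin])
    then show "length p < Suc (card V)" using distinct_card[OF d] by simp
  qed
  have "P [z,x]" using P0 unfolding P_def by simp
  from ex_has_greatest_nat[of P "[z,x]" length "Suc (card V)", OF this bnd]
  obtain m where m: "P m" "\<And>p. P p \<Longrightarrow> length p \<le> length m" by blast
  have "length m \<ge> 2" using m(2)[of "[z,x]"] P0 P_def by simp
  then obtain v u rest where mv: "m = v # u # rest"
    by (metis Suc_le_length_iff numeral_2_eq_2)
  have Evu: "E v u" using m(1) mv P_def by simp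
  have "\<forall>q. E v q \<longrightarrow> q = u"
  proof (intro allI impI)
    fix w assume Evw: "E v w"
    show "w = u"
    proof (rule ccontr)
      assume wu: "w \<noteq> u"
      show False
      proof (cases "w \<in> set m")
        case False
        then have "P (w # m)" using m(1) ed[OF Evw] mv unfolding P_def by simp
        then show False using m(2)[of "w # m"] by simp
      next
        case True
        have "w \<noteq> v" using ed[OF Evw] by blast
        then have "w \<in> set rest" using True wu mv by auto
        then obtain r1 r2 where rr: "rest = r1 @ w # r2" by (meson split_list)
        define c where "c = v # u # r1 @ [w]"
        have "wk E V c" using m(1) mv rr wk_prefix[of E V c r2] unfolding P_def c_def by simp
        moreover have "distinct c" using m(1) mv rr unfolding P_def c_def by auto
        moreover have "length c \<ge> 3" unfolding c_def by simp
        moreover have "E (last c) (hd c)" unfolding c_def using ed[OF Evw] by simp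
        ultimately have "has_cycle V E" unfolding has_cycle_def is_path_wk by blast
        then show False using nc by simp
      qed
    qed
  qed
  moreover have "v \<in> V" using m(1) mv P_def by (auto dest: wk_hd)
  ultimately show ?thesis using Evu by blast
qed



lemma tree_remove_leaf:
  assumes t: "is_tree V E" and v: "v \<in> V" and Evp: "E v p" and leaf: "\<And>q. E v q \<Longrightarrow> q = p"
    and two: "card V \<ge> 2"
  shows "is_tree (V - {v}) (\<lambda>x y. E x y \<and> x \<noteq> v \<and> y \<noteq> v)"
proof -
  have fin: "finite V" and ed: "\<And>a b. E a b \<Longrightarrow> a \<in> V \<and> b \<in> V \<and> E b a \<and> a \<noteq> b"
    and con: "connected_on E V" and nc: "\<not> has_cycle V E" using t unfolding is_tree_def by (blast, blast, blast, blast)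
  have sym: "\<And>a b. E a b \<Longrightarrow> E b a" using ed by blast
  have ne: "V - {v} \<noteq> {}"
  proof
    assume "V - {v} = {}"
    then have "V = {v}" using v by blast
    then show False using two by simp
  qed
  have c2: "connected_on (\<lambda>x y. E x y \<and> x \<noteq> v \<and> y \<noteq> v) (V - {v})"
    by (rule leaf_connected[where p=p, OF sym leaf con])
  have nc2: "\<not> has_cycle (V - {v}) (\<lambda>x y. E x y \<and> x \<noteq> v \<and> y \<noteq> v)"
  proof
    assume "has_cycle (V - {v}) (\<lambda>x y. E x y \<and> x \<noteq> v \<and> y \<noteq> v)"
    then obtain c where c: "wk (\<lambda>x y. E x y \<and> x \<noteq> v \<and> y \<noteq> v) (V - {v}) c" "distinct c" "length c \<ge> 3"
       "E (last c) (hd c)" unfolding has_cycle_def is_path_wk by blast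
    have "wk E V c" using wk_mono[OF wk_restrict_rev[OF c(1)]] by blast
    then have "has_cycle V E" using c unfolding has_cycle_def is_path_wk by blast
    then show False using nc by simp
  qed
  show ?thesis unfolding is_tree_def using fin ne c2 nc2 ed by auto
qed

lemma helly3:
  "finite V \<Longrightarrow> is_tree V E \<Longrightarrow> A \<subseteq> V \<Longrightarrow> B \<subseteq> V \<Longrightarrow> C \<subseteq> V \<Longrightarrow>
   connected_on E A \<Longrightarrow> connected_on E B \<Longrightarrow> connected_on E C \<Longrightarrow>
   A \<inter> B \<noteq> {} \<Longrightarrow> A \<inter> C \<noteq> {} \<Longrightarrow> B \<inter> C \<noteq> {} \<Longrightarrow> \<exists>w. w \<in> A \<and> w \<in> B \<and> w \<in> C"
proof (induction "card V" arbitrary: V E A B C rule: less_induct)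
  case less
  note t = less(3)
  show ?case
  proof (cases "card V \<ge> 2")
    case False
    obtain a where a: "a \<in> A" "a \<in> B" using less(10) by blast
    obtain c where c: "c \<in> C" using less(11) by blast
    have "card V \<le> Suc 0" using False by simp
    then have "a = c" using a c less(2,4,6) card_le_Suc0_iff_eq[OF less(2)] by blast
    then show ?thesis using a c by blast
  next
    case True
    then obtain x y where xy: "x \<in> V" "y \<in> V" "x \<noteq> y"
      by (metis One_nat_def card_le_Suc0_iff_eq[OF less(2)] not_less_eq_eq numeral_2_eq_2)
    obtain v p where v: "v \<in> V" "E v p" and leaf: "\<And>q. E v q \<Longrightarrow> q = p"
      using leaf_exists[OF t xy] by blast
    have ed: "\<And>a b. E a b \<Longrightarrow> a \<in> V \<and> b \<in> V \<and> E b a \<and> a \<noteq> b"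
      using t unfolding is_tree_def by blast
    have sym: "\<And>a b. E a b \<Longrightarrow> E b a" using ed by blast
    have pv: "p \<noteq> v" using ed[OF v(2)] by blast
    define E' where "E' = (\<lambda>x y. E x y \<and> x \<noteq> v \<and> y \<noteq> v)"
    have t': "is_tree (V - {v}) E'" unfolding E'_def by (rule tree_remove_leaf[OF t v leaf True])
    have lt: "card (V - {v}) < card V" using v less(2) True by simp
    show ?thesis
    proof (cases "A = {v} \<or> B = {v} \<or> C = {v}")
      case True
      then show ?thesis using less(10,11,12) by blast
    next
      case False
      have sh: "X - {v} \<noteq> {}" "connected_on E' (X - {v})" "X - {v} \<subseteq> V - {v}"
        "v \<in> X \<Longrightarrow> p \<in> X"
        if "X \<subseteq> V" "connected_on E X" "X \<noteq> {v}" "X \<noteq> {}" for X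
      proof -
        show "X - {v} \<noteq> {}" using that by blast
        show "connected_on E' (X - {v})" unfolding E'_def by (rule leaf_connected[where p=p, OF sym leaf that(2)])
        show "X - {v} \<subseteq> V - {v}" using that by blast
        show "p \<in> X" if "v \<in> X"
        proof -
          obtain w where "w \<in> X" "w \<noteq> v" using \<open>X - {v} \<noteq> {}\<close> by blast
          then show ?thesis using leaf_in[where p=p, OF leaf \<open>connected_on E X\<close> that] by blast
        qed
      qed
      have neA: "A \<noteq> {}" "B \<noteq> {}" "C \<noteq> {}" using less(10,11,12) by auto
      have int: "(X - {v}) \<inter> (Y - {v}) \<noteq> {}"
        if "X \<inter> Y \<noteq> {}" "v \<in> X \<Longrightarrow> p \<in> X" "v \<in> Y \<Longrightarrow> p \<in> Y" for X Y
        using that pv by blast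
      have A': "A - {v} \<noteq> {}" "connected_on E' (A - {v})" "A - {v} \<subseteq> V - {v}" "v \<in> A \<Longrightarrow> p \<in> A"
        using sh[OF less(4,7)] False neA by auto
      have B': "B - {v} \<noteq> {}" "connected_on E' (B - {v})" "B - {v} \<subseteq> V - {v}" "v \<in> B \<Longrightarrow> p \<in> B"
        using sh[OF less(5,8)] False neA by auto
      have C': "C - {v} \<noteq> {}" "connected_on E' (C - {v})" "C - {v} \<subseteq> V - {v}" "v \<in> C \<Longrightarrow> p \<in> C"
        using sh[OF less(6,9)] False neA by auto
      have "\<exists>w. w \<in> A - {v} \<and> w \<in> B - {v} \<and> w \<in> C - {v}"
        using less(1)[OF lt _ t' A'(3) B'(3) C'(3) A'(2) B'(2) C'(2)
            int[OF less(10) A'(4) B'(4)] int[OF less(11) A'(4) C'(4)] int[OF less(12) B'(4) C'(4)]]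
          less(2) by blast
      then show ?thesis by blast
    qed
  qed
qed



lemma chain_union:
  assumes "a \<le> b" and "\<And>i. a \<le> i \<Longrightarrow> i < b \<Longrightarrow> S i \<inter> S (Suc i) \<noteq> {}"
    and "\<And>i. a \<le> i \<Longrightarrow> i \<le> b \<Longrightarrow> connected_on E (S i)"
  shows "connected_on E (\<Union>i\<in>{a..b}. S i)"
  using assms(1)
proof (induction b rule: dec_induct)
  case base then show ?case using assms(1) assms(3)[of a] by simp
next
  case (step n)
  have eq: "(\<Union>i\<in>{a..Suc n}. S i) = (\<Union>i\<in>{a..n}. S i) \<union> S (Suc n)"
    using step(1) by (simp add: atLeastAtMostSuc_conv Un_commute)
  have "S n \<subseteq> (\<Union>i\<in>{a..n}. S i)" using step(1) by auto
  then have int: "(\<Union>i\<in>{a..n}. S i) \<inter> S (Suc n) \<noteq> {}" using assms(2)[of n] step(1,2) by blast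
  have cs: "connected_on E (S (Suc n))" using assms(3)[of "Suc n"] step(1,2) by simp
  show ?case unfolding eq by (rule connected_union[OF step(3) cs int])
qed

theorem mainTheorem3:
  fixes L l :: nat and VT :: "'b set" and ET :: "'b \<Rightarrow> 'b \<Rightarrow> bool"
    and phi :: "nat \<times> nat \<Rightarrow> 'b set"
  assumes "l \<ge> 2" and "L \<ge> l"
    and "tree_decomposition (ringed_verts L) (ringed_edge L) VT ET phi"
  shows "\<exists>w\<in>VT. \<exists>i j. 1 \<le> i \<and> i < j \<and> j \<le> 2 ^ l
           \<and> w \<in> phi (l, i) \<and> w \<in> phi (l, j)
           \<and> min (j - i) (2 ^ l + i - j) \<ge> 2 ^ (l - 2)"
proof -
  define m :: nat where "m = 2 ^ (l - 2)"
  obtain k where k: "l = k + 2" using assms(1) by (metis add.commute le_add_diff_inverse)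
  have n4: "(2::nat) ^ l = 4 * m" unfolding m_def k by simp
  have m1: "m \<ge> 1" unfolding m_def by simp
  define S where "S i = phi (l, i)" for i
  have td: "is_tree VT ET" "\<And>x. x \<in> ringed_verts L \<Longrightarrow> is_subtree VT ET (phi x)"
    "\<And>x y. x \<in> ringed_verts L \<Longrightarrow> y \<in> ringed_verts L \<Longrightarrow> ringed_edge L x y \<Longrightarrow> phi x \<inter> phi y \<noteq> {}"
    using assms(3) unfolding tree_decomposition_def by blast+
  have vin: "(l, i) \<in> ringed_verts L" if "1 \<le> i" "i \<le> 4 * m" for i
    using that assms(2) n4 unfolding ringed_verts_def by simp
  have sub: "S i \<noteq> {}" "S i \<subseteq> VT" "connected_on ET (S i)" if "1 \<le> i" "i \<le> 4 * m" for i
    using td(2)[OF vin[OF that]] unfolding is_subtree_def S_def by auto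
  have cons: "S i \<inter> S (Suc i) \<noteq> {}" if "1 \<le> i" "i < 4 * m" for i
  proof -
    have "ringed_edge L (l, i) (l, Suc i)"
      unfolding ringed_edge_def ringed_arc_def using vin[of i] vin[of "Suc i"] that by simp
    then show ?thesis using td(3) vin[of i] vin[of "Suc i"] that unfolding S_def by simp
  qed
  have wrap: "S (4 * m) \<inter> S 1 \<noteq> {}"
  proof -
    have "ringed_edge L (l, 4 * m) (l, 1)"
      unfolding ringed_edge_def ringed_arc_def using vin[of "4*m"] vin[of 1] m1 n4 by simp
    then show ?thesis using td(3) vin[of "4*m"] vin[of 1] m1 unfolding S_def by simp
  qed
  define A where "A = (\<Union>i\<in>{1..m}. S i)"
  define B where "B = (\<Union>i\<in>{m+1..2*m}. S i)"
  define C where "C = (\<Union>i\<in>{2*m+1..4*m}. S i)"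
  have cA: "connected_on ET A" unfolding A_def
    by (rule chain_union) (use m1 cons sub in auto)
  have cB: "connected_on ET B" unfolding B_def
    by (rule chain_union) (use m1 cons sub in auto)
  have cC: "connected_on ET C" unfolding C_def
    by (rule chain_union) (use m1 cons sub in auto)
  have sA: "A \<subseteq> VT" unfolding A_def
  proof (intro UN_least)
    fix i assume "i \<in> {1..m}"
    then show "S i \<subseteq> VT" using sub(2)[of i] m1 by simp
  qed
  have sB: "B \<subseteq> VT" unfolding B_def
  proof (intro UN_least)
    fix i assume "i \<in> {m+1..2*m}"
    then show "S i \<subseteq> VT" using sub(2)[of i] m1 by simp
  qed
  have sC: "C \<subseteq> VT" unfolding C_def
  proof (intro UN_least)
    fix i assume "i \<in> {2*m+1..4*m}"
    then show "S i \<subseteq> VT" using sub(2)[of i] m1 by simp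
  qed
  have AB: "A \<inter> B \<noteq> {}"
  proof -
    have "S m \<subseteq> A" "S (Suc m) \<subseteq> B" unfolding A_def B_def by (rule UN_upper, use m1 in simp)+
    then show ?thesis using cons[of m] m1 by auto
  qed
  have BC: "B \<inter> C \<noteq> {}"
  proof -
    have "S (2*m) \<subseteq> B" "S (Suc (2*m)) \<subseteq> C" unfolding C_def B_def by (rule UN_upper, use m1 in simp)+
    then show ?thesis using cons[of "2*m"] m1 by auto
  qed
  have AC: "A \<inter> C \<noteq> {}"
  proof -
    have "S 1 \<subseteq> A" "S (4*m) \<subseteq> C" unfolding C_def A_def by (rule UN_upper, use m1 in simp)+
    then show ?thesis using wrap by auto
  qed
  have fin: "finite VT" using td(1) unfolding is_tree_def by blast
  obtain w where w: "w \<in> A" "w \<in> B" "w \<in> C"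
    using helly3[OF fin td(1) sA sB sC cA cB cC AB AC BC] by blast
  obtain a where a: "1 \<le> a" "a \<le> m" "w \<in> S a" using w(1) unfolding A_def by auto
  obtain b where b: "m + 1 \<le> b" "b \<le> 2 * m" "w \<in> S b" using w(2) unfolding B_def by auto
  obtain c where c: "2 * m + 1 \<le> c" "c \<le> 4 * m" "w \<in> S c" using w(3) unfolding C_def by auto
  have wV: "w \<in> VT" using w(3) sC by blast
  show ?thesis
  proof (cases "c - b \<ge> m")
    case True
    show ?thesis
      by (rule bexI[OF _ wV], rule exI[of _ b], rule exI[of _ c])
        (use a b c True n4 m1 in \<open>auto simp: S_def m_def[symmetric]\<close>)
  next
    case False
    show ?thesis
      by (rule bexI[OF _ wV], rule exI[of _ a], rule exI[of _ c])
        (use a b c False n4 m1 in \<open>auto simp: S_def m_def[symmetric]\<close>)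
  qed
qed

end
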